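(* For all bivariate copulas $C,D\in\mathcal{C}$: (i) $C\vee M=C$; (ii) $C\vee D=M$ if and only if $C=D$; (iii) $C\vee\Pi$ is stochastically increasing (SI), i.e. $C\vee \Pi\in\mathcal{C}^\uparrow$.
   Context: A bivariate copula is a distribution function on $[0,1]^2$ with standard uniform marginals; $\mathcal{C}$ denotes the class of all bivariate copulas. $\partial_2 C$ denotes the partial derivative of $C$ with respect to its second argument (which exists Lebesgue-a.e.). $\Pi(u,v)=uv$ and $M(u,v)=\min\{u,v\}$. For $D,E\in\mathcal{C}$, the upper product is $D\vee E(u,v):=\int_0^1\min\{\partial_2D(u,t),\partial_2E(v,t)\}\,dt$ for $(u,v)\in[0,1]^2$. A copula $C$ is stochastically increasing (SI) if $C(v,\cdot)$ is concave on $[0,1]$ for every $v\in[0,1]$; $\mathcal{C}^\uparrow$ denotes the class of SI copulas. *)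

theory Defs
  imports "HOL-Analysis.Analysis"
begin

text \<open>Bivariate copulas, represented as real functions of two variables; only the
values on the unit square matter.\<close>
definition copula :: "(real \<Rightarrow> real \<Rightarrow> real) \<Rightarrow> bool" where
  "copula C \<longleftrightarrow>
     (\<forall>u\<in>{0..1}. C u 0 = 0 \<and> C 0 u = 0 \<and> C u 1 = u \<and> C 1 u = u) \<and>
     (\<forall>u1 u2 v1 v2. 0 \<le> u1 \<longrightarrow> u1 \<le> u2 \<longrightarrow> u2 \<le> 1 \<longrightarrow>
        0 \<le> v1 \<longrightarrow> v1 \<le> v2 \<longrightarrow> v2 \<le> 1 \<longrightarrow>
        C u2 v2 - C u2 v1 - C u1 v2 + C u1 v1 \<ge> 0)"

definition PiC :: "real \<Rightarrow> real \<Rightarrow> real" where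
  "PiC u v = u * v"

definition MC :: "real \<Rightarrow> real \<Rightarrow> real" where
  "MC u v = min u v"

text \<open>Partial derivative with respect to the second argument (set to 0 where it does
not exist; this happens only on a Lebesgue null set for copulas).\<close>
definition partial2 :: "(real \<Rightarrow> real \<Rightarrow> real) \<Rightarrow> real \<Rightarrow> real \<Rightarrow> real" where
  "partial2 C u t = (if (\<lambda>s. C u s) differentiable (at t) then deriv (\<lambda>s. C u s) t else 0)"

definition upper_prod :: "(real \<Rightarrow> real \<Rightarrow> real) \<Rightarrow> (real \<Rightarrow> real \<Rightarrow> real) \<Rightarrow> real \<Rightarrow> real \<Rightarrow> real" where
  "upper_prod D E u v = (LBINT t:{0..1}. min (partial2 D u t) (partial2 E v t))"

definition SI_copula :: "(real \<Rightarrow> real \<Rightarrow> real) \<Rightarrow> bool" where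
  "SI_copula C \<longleftrightarrow> copula C \<and> (\<forall>v\<in>{0..1}. concave_on {0..1} (\<lambda>t. C v t))"

end

theory Submission
  imports Defs "HOL-Analysis.Analysis"
begin

definition lipmono :: "(real \<Rightarrow> real) \<Rightarrow> bool" where
  "lipmono F \<longleftrightarrow> (\<forall>x y. x \<le> y \<longrightarrow> F x \<le> F y \<and> F y - F x \<le> y - x)"

definition dq :: "(real \<Rightarrow> real) \<Rightarrow> real \<Rightarrow> real \<Rightarrow> real" where
  "dq F t h = (F (t + h) - F t) / h"

definition Ebad :: "(real \<Rightarrow> real) \<Rightarrow> real \<Rightarrow> real \<Rightarrow> real set" where
  "Ebad F p q = {t. (\<exists>\<^sub>F h in at 0. dq F t h < p) \<and> (\<exists>\<^sub>F h in at 0. q < dq F t h)}"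

lemma lipmonoD:
  assumes "lipmono F" "x \<le> y"
  shows "F x \<le> F y" "F y - F x \<le> y - x"
  using assms unfolding lipmono_def by auto

lemma lipmono_abs:
  assumes "lipmono F"
  shows "\<bar>F x - F y\<bar> \<le> \<bar>x - y\<bar>"
proof (cases "x \<le> y")
  case True
  then show ?thesis using lipmonoD[OF assms True] by auto
next
  case False
  then have "y \<le> x" by auto
  then show ?thesis using lipmonoD[OF assms \<open>y \<le> x\<close>] by auto
qed

lemma lipmono_cont:
  assumes "lipmono F"
  shows "continuous_on UNIV F"
proof -
  have "continuous_on UNIV F"
    unfolding continuous_on_iff
  proof (intro ballI allI impI)
    fix x :: real and e :: real assume "e > 0"
    show "\<exists>d>0. \<forall>x'\<in>UNIV. dist x' x < d \<longrightarrow> dist (F x') (F x) < e"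
      using lipmono_abs[OF assms] \<open>e > 0\<close>
      by (intro exI[of _ e]) (auto simp: dist_real_def intro: le_less_trans)
  qed
  then show ?thesis .
qed

lemma lipmono_isCont: "lipmono F \<Longrightarrow> isCont F x"
  using lipmono_cont continuous_on_eq_continuous_at by blast

lemma dq_bounds:
  assumes "lipmono F"
  shows "0 \<le> dq F t h" "dq F t h \<le> 1"
proof -
  have "0 \<le> dq F t h \<and> dq F t h \<le> 1"
  proof (cases "h > 0")
    case True
    then show ?thesis using lipmonoD[OF assms, of t "t+h"]
      by (auto simp: dq_def field_simps)
  next
    case False
    show ?thesis
    proof (cases "h = 0")
      case True then show ?thesis by (simp add: dq_def)
    next
      case False
      with \<open>\<not> h > 0\<close> have "h < 0" by auto
      have "(F (t + h) - F t) / h = (F t - F (t + h)) / (- h)" using False by (simp add: field_simps)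
      moreover have "F (t+h) \<le> F t" "F t - F (t + h) \<le> - h"
        using lipmonoD[OF assms, of "t+h" t] \<open>h < 0\<close> by auto
      ultimately show ?thesis using \<open>h < 0\<close> by (auto simp: dq_def field_simps)
    qed
  qed
  then show "0 \<le> dq F t h" "dq F t h \<le> 1" by auto
qed

lemma frequently_at0:
  "(\<exists>\<^sub>F h in at (0::real). P h) \<longleftrightarrow> (\<forall>d>0. \<exists>h. h \<noteq> 0 \<and> \<bar>h\<bar> < d \<and> P h)"
  unfolding frequently_def eventually_at by (auto simp: dist_real_def)

lemma diff_if_not_bad:
  assumes F: "lipmono F"
    and nb: "\<And>p q. p \<in> \<rat> \<Longrightarrow> q \<in> \<rat> \<Longrightarrow> 0 < p \<Longrightarrow> p < q \<Longrightarrow> t \<notin> Ebad F p q"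
  shows "F differentiable (at t)"
proof -
  define S where "S = {p\<in>\<rat>. \<forall>\<^sub>F h in at 0. p < dq F t h}"
  define L where "L = Sup S"
  have "-1 \<in> S" unfolding S_def using dq_bounds[OF F]
    by (auto intro!: always_eventually) (smt (verit) dq_bounds[OF F])
  have bdd: "bdd_above S"
  proof (rule bdd_aboveI)
    fix p assume "p \<in> S"
    then have "\<forall>\<^sub>F h in at (0::real). p < dq F t h" by (auto simp: S_def)
    then obtain h where "p < dq F t h"
      using eventually_happens' trivial_limit_at by blast
    then show "p \<le> 1" using dq_bounds[OF F, of t h] by auto
  qed
  have "((\<lambda>h. dq F t h) \<longlongrightarrow> L) (at 0)"
    unfolding order_tendsto_iff
  proof (intro conjI allI impI)
    fix l assume "l < L"
    then obtain p where "p \<in> S" "l < p"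
      using less_cSup_iff[of S l] \<open>-1 \<in> S\<close> bdd by (auto simp: L_def)
    then show "\<forall>\<^sub>F h in at 0. l < dq F t h"
      by (auto simp: S_def elim: eventually_mono)
  next
    fix u assume "L < u"
    obtain p1 where p1: "p1 \<in> \<rat>" "L < p1" "p1 < u" using Rats_dense_in_real[OF \<open>L < u\<close>] by auto
    obtain p2 where p2: "p2 \<in> \<rat>" "p1 < p2" "p2 < u" using Rats_dense_in_real[OF \<open>p1 < u\<close>] by auto
    obtain q where q: "q \<in> \<rat>" "p2 < q" "q < u" using Rats_dense_in_real[OF \<open>p2 < u\<close>] by auto
    have "p1 \<notin> S"
      using cSup_upper[OF _ bdd, of p1] p1 by (auto simp: L_def)
    then have "\<not> (\<forall>\<^sub>F h in at 0. p1 < dq F t h)" using p1 by (auto simp: S_def)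
    have fr: "\<exists>\<^sub>F h in at 0. dq F t h < p2"
    proof (rule ccontr)
      assume "\<not> (\<exists>\<^sub>F h in at 0. dq F t h < p2)"
      then have "\<forall>\<^sub>F h in at 0. \<not> dq F t h < p2" unfolding frequently_def by simp
      then have "\<forall>\<^sub>F h in at 0. p1 < dq F t h" by (rule eventually_mono) (use p2 in auto)
      with \<open>\<not> (\<forall>\<^sub>F h in at 0. p1 < dq F t h)\<close> show False by blast
    qed
    then obtain h where "dq F t h < p2"
      by (meson frequently_ex)
    then have "0 < p2" using dq_bounds[OF F, of t h] by auto
    have "t \<notin> Ebad F p2 q" using nb p2 q \<open>0 < p2\<close> by auto
    then have "\<not> (\<exists>\<^sub>F h in at 0. q < dq F t h)" using fr by (auto simp: Ebad_def)
    then have "\<forall>\<^sub>F h in at 0. dq F t h \<le> q"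
      unfolding frequently_def by (auto elim: eventually_mono)
    then show "\<forall>\<^sub>F h in at 0. dq F t h < u"
      using q by (auto elim: eventually_mono)
  qed
  then have "(F has_real_derivative L) (at t)"
    unfolding DERIV_def dq_def .
  then show ?thesis
    using real_differentiable_def by blast
qed

lemma not_bad_if_diff:
  assumes "(F has_real_derivative D) (at t)" "p < q"
  shows "t \<notin> Ebad F p q"
proof
  assume "t \<in> Ebad F p q"
  then have f1: "\<exists>\<^sub>F h in at 0. dq F t h < p" and f2: "\<exists>\<^sub>F h in at 0. q < dq F t h"
    by (auto simp: Ebad_def)
  have lim: "((\<lambda>h. dq F t h) \<longlongrightarrow> D) (at 0)"
    using assms(1) unfolding DERIV_def dq_def .
  show False
  proof (cases "D < q")
    case True
    then have "\<forall>\<^sub>F h in at 0. dq F t h < q" using lim order_tendstoD(2) by blast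
    then have "\<forall>\<^sub>F h in at 0. \<not> q < dq F t h" by (rule eventually_mono) auto
    then show False using f2 unfolding frequently_def by blast
  next
    case False
    then have "p < D" using assms by auto
    then have "\<forall>\<^sub>F h in at 0. p < dq F t h" using lim order_tendstoD(1) by blast
    then have "\<forall>\<^sub>F h in at 0. \<not> dq F t h < p" by (rule eventually_mono) auto
    then show False using f1 unfolding frequently_def by blast
  qed
qed


lemma dq_cont_t: "lipmono F \<Longrightarrow> continuous_on UNIV (\<lambda>t. dq F t h)"
  unfolding dq_def divide_inverse
  by (intro continuous_intros continuous_on_compose2[OF lipmono_cont[of F]]) auto

lemma dq_isCont_h:
  assumes "lipmono F" "h \<noteq> 0"
  shows "isCont (\<lambda>h. dq F t h) h"
  unfolding dq_def using assms
  by (intro continuous_intros isCont_o2[OF _ lipmono_isCont[OF assms(1)]]) auto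

lemma freq_set_eq:
  assumes F: "lipmono F" and Ob: "open Ob"
  shows "{t. \<exists>\<^sub>F h in at 0. dq F t h \<in> Ob} =
    (\<Inter>n. \<Union>h\<in>\<rat> \<inter> {h. h \<noteq> 0 \<and> \<bar>h\<bar> < inverse (real (Suc n))}. {t. dq F t h \<in> Ob})"
proof (intro set_eqI iffI)
  fix t assume "t \<in> {t. \<exists>\<^sub>F h in at 0. dq F t h \<in> Ob}"
  then have fr: "\<forall>d>0. \<exists>h. h \<noteq> 0 \<and> \<bar>h\<bar> < d \<and> dq F t h \<in> Ob"
    using frequently_at0 by auto
  show "t \<in> (\<Inter>n. \<Union>h\<in>\<rat> \<inter> {h. h \<noteq> 0 \<and> \<bar>h\<bar> < inverse (real (Suc n))}. {t. dq F t h \<in> Ob})"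
  proof (rule INT_I)
    fix n :: nat assume "n \<in> UNIV"
    obtain h where h: "h \<noteq> 0" "\<bar>h\<bar> < inverse (real (Suc n))" "dq F t h \<in> Ob"
      using fr[rule_format, of "inverse (real (Suc n))"] by auto
    have "\<forall>\<^sub>F h' in at h. dq F t h' \<in> Ob"
      using dq_isCont_h[OF F h(1), of t] Ob h(3) unfolding isCont_def
      by (rule topological_tendstoD)
    then obtain e where e0: "e > 0" "\<And>h'. h' \<noteq> h \<Longrightarrow> dist h' h < e \<Longrightarrow> dq F t h' \<in> Ob"
      unfolding eventually_at by auto
    have e2: "\<And>h'. dist h' h < e \<Longrightarrow> dq F t h' \<in> Ob"
      using h(3) e0 by metis
    note e = e0(1) e2
    define d where "d = min e (min \<bar>h\<bar> (inverse (real (Suc n)) - \<bar>h\<bar>))"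
    have "d > 0" using e h by (auto simp: d_def)
    obtain r where r: "r \<in> \<rat>" "h - d < r" "r < h + d"
      using Rats_dense_in_real[of "h - d" "h + d"] \<open>d > 0\<close> by auto
    have "r \<noteq> 0" using r by (auto simp: d_def split: if_splits)
    moreover have "\<bar>r\<bar> < inverse (real (Suc n))"
    proof -
      have "d \<le> inverse (real (Suc n)) - \<bar>h\<bar>" by (simp add: d_def)
      then show ?thesis using r(2,3) by (auto simp: abs_if split: if_splits)
    qed
    moreover have "dq F t r \<in> Ob" using e(2)[of r] r by (auto simp: dist_real_def d_def)
    ultimately show "t \<in> (\<Union>h\<in>\<rat> \<inter> {h. h \<noteq> 0 \<and> \<bar>h\<bar> < inverse (real (Suc n))}. {t. dq F t h \<in> Ob})"
      using r(1) by (intro UN_I[of r]) auto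
  qed
next
  fix t assume t: "t \<in> (\<Inter>n. \<Union>h\<in>\<rat> \<inter> {h. h \<noteq> 0 \<and> \<bar>h\<bar> < inverse (real (Suc n))}. {t. dq F t h \<in> Ob})"
  have "\<forall>d>0. \<exists>h. h \<noteq> 0 \<and> \<bar>h\<bar> < d \<and> dq F t h \<in> Ob"
  proof (intro allI impI)
    fix d :: real assume "d > 0"
    then obtain n where n: "n > 0" "inverse (real n) < d" using ex_inverse_of_nat_less by blast
    then have "real (Suc (n - 1)) = real n" by auto
    with t obtain h where "h \<noteq> 0" "\<bar>h\<bar> < inverse (real n)" "dq F t h \<in> Ob"
      by (auto dest!: spec[of _ "n - 1"])
    then show "\<exists>h. h \<noteq> 0 \<and> \<bar>h\<bar> < d \<and> dq F t h \<in> Ob" using n by (auto intro!: exI[of _ h])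
  qed
  then show "t \<in> {t. \<exists>\<^sub>F h in at 0. dq F t h \<in> Ob}"
    using frequently_at0 by auto
qed

lemma freq_set_borel:
  assumes F: "lipmono F" and Ob: "open Ob"
  shows "{t. \<exists>\<^sub>F h in at 0. dq F t h \<in> Ob} \<in> sets borel"
proof -
  have "(\<Union>h\<in>\<rat> \<inter> {h. h \<noteq> 0 \<and> \<bar>h\<bar> < inverse (real (Suc n))}. {t. dq F t h \<in> Ob}) \<in> sets borel" for n
  proof (rule sets.countable_UN'')
    show "countable (\<rat> \<inter> {h. h \<noteq> 0 \<and> \<bar>h\<bar> < inverse (real (Suc n))})"
      using countable_rat by (rule countable_subset[rotated]) auto
    fix h
    have "open ((\<lambda>t. dq F t h) -` Ob)" by (rule open_vimage[OF Ob dq_cont_t[OF F]])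
    then show "{t. dq F t h \<in> Ob} \<in> sets borel" by (simp add: vimage_def)
  qed
  then have "(\<Inter>n. \<Union>h\<in>\<rat> \<inter> {h. h \<noteq> 0 \<and> \<bar>h\<bar> < inverse (real (Suc n))}. {t. dq F t h \<in> Ob}) \<in> sets borel"
    by (intro sets.countable_INT) auto
  then show ?thesis using freq_set_eq[OF F Ob] by simp
qed

lemma Ebad_borel:
  assumes F: "lipmono F"
  shows "Ebad F p q \<in> sets borel"
proof -
  have "Ebad F p q = {t. \<exists>\<^sub>F h in at 0. dq F t h \<in> {..<p}} \<inter> {t. \<exists>\<^sub>F h in at 0. dq F t h \<in> {q<..}}"
    by (auto simp: Ebad_def)
  moreover have "{t. \<exists>\<^sub>F h in at 0. dq F t h \<in> {..<p}} \<in> sets borel"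
    "{t. \<exists>\<^sub>F h in at 0. dq F t h \<in> {q<..}} \<in> sets borel"
    using freq_set_borel[OF F, of "{..<p}"] freq_set_borel[OF F, of "{q<..}"] by auto
  ultimately show ?thesis by auto
qed

definition nondiff :: "(real \<Rightarrow> real) \<Rightarrow> real set" where
  "nondiff F = {t. \<not> F differentiable (at t)}"

lemma nondiff_eq:
  assumes F: "lipmono F"
  shows "nondiff F = (\<Union>pq\<in>(\<rat> \<times> \<rat>) \<inter> {pq. 0 < fst pq \<and> fst pq < snd pq}. Ebad F (fst pq) (snd pq))"
proof (intro set_eqI iffI)
  fix t assume "t \<in> nondiff F"
  then have "\<not> F differentiable (at t)" by (auto simp: nondiff_def)
  then obtain p q where "p \<in> \<rat>" "q \<in> \<rat>" "0 < p" "p < q" "t \<in> Ebad F p q"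
    using diff_if_not_bad[OF F, of t] by blast
  then show "t \<in> (\<Union>pq\<in>(\<rat> \<times> \<rat>) \<inter> {pq. 0 < fst pq \<and> fst pq < snd pq}. Ebad F (fst pq) (snd pq))"
    by (auto intro!: bexI[of _ "(p, q)"])
next
  fix t assume "t \<in> (\<Union>pq\<in>(\<rat> \<times> \<rat>) \<inter> {pq. 0 < fst pq \<and> fst pq < snd pq}. Ebad F (fst pq) (snd pq))"
  then obtain p q where "p < q" "t \<in> Ebad F p q" by auto
  then show "t \<in> nondiff F"
    using not_bad_if_diff[of F _ t p q] by (auto simp: nondiff_def real_differentiable_def)
qed

lemma nondiff_borel:
  assumes F: "lipmono F"
  shows "nondiff F \<in> sets borel"
  unfolding nondiff_eq[OF F]
  by (rule sets.countable_UN'') (auto intro: countable_subset[OF _ countable_SIGMA[OF countable_rat countable_rat]] Ebad_borel[OF F])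


lemma dq_incr:
  assumes "h \<noteq> 0"
  shows "F (x + h/2 + \<bar>h\<bar>/2) - F (x + h/2 - \<bar>h\<bar>/2) = dq F x h * \<bar>h\<bar>"
proof (cases "h > 0")
  case True
  then show ?thesis by (simp add: dq_def add.commute)
next
  case False
  with assms have "h < 0" by auto
  then have eqs: "x + h/2 + \<bar>h\<bar>/2 = x" "x + h/2 - \<bar>h\<bar>/2 = x + h" by auto
  have "F (x + h/2 + \<bar>h\<bar>/2) - F (x + h/2 - \<bar>h\<bar>/2) = F x - F (x + h)" by (simp only: eqs)
  also have "\<dots> = dq F x h * \<bar>h\<bar>" using \<open>h < 0\<close> by (simp add: dq_def abs_of_neg divide_simps)
  finally show ?thesis .
qed

lemma fine_cover:
  assumes V: "open V" "x \<in> V" and fr: "\<exists>\<^sub>F h in at 0. P (dq F x h)" and d: "d > 0"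
  shows "\<exists>i. 0 < snd i \<and> cball (fst i) (snd i) \<subseteq> V \<and> x \<in> cball (fst i) (snd i) \<and> snd i < d \<and>
          P ((F (fst i + snd i) - F (fst i - snd i)) / (2 * snd i))"
proof -
  obtain e where e: "e > 0" "ball x e \<subseteq> V" using V open_contains_ball by blast
  obtain h where h: "h \<noteq> 0" "\<bar>h\<bar> < min e d" "P (dq F x h)"
    using fr unfolding frequently_at0 using e d by (meson min_less_iff_conj)
  define i where "i = (x + h/2, \<bar>h\<bar>/2)"
  have "cball (fst i) (snd i) \<subseteq> ball x e"
  proof
    fix y assume "y \<in> cball (fst i) (snd i)"
    then have "\<bar>y - (x + h/2)\<bar> \<le> \<bar>h\<bar>/2" by (auto simp: i_def dist_real_def abs_minus_commute)
    then have "\<bar>y - x\<bar> \<le> \<bar>h\<bar>" by (auto simp: abs_if split: if_splits)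
    then show "y \<in> ball x e" using h(2) by (auto simp: dist_real_def abs_minus_commute)
  qed
  moreover have "x \<in> cball (fst i) (snd i)" by (auto simp: i_def dist_real_def)
  moreover have "(F (fst i + snd i) - F (fst i - snd i)) / (2 * snd i) = dq F x h"
    using dq_incr[OF h(1), of F x] h(1) by (simp add: i_def)
  ultimately show ?thesis using h e by (intro exI[of _ i]) (auto simp: i_def)
qed

lemma cball_minus_ball_real: "cball (a::real) r - ball a r \<subseteq> {a - r, a + r}"
  by (auto simp: dist_real_def abs_if split: if_splits)

lemma core:
  fixes E U :: "real set"
  assumes F: "lipmono F" and pq: "0 < p" "p < q"
    and E: "E \<subseteq> Ebad F p q" and U: "open U" "bounded U" "E \<subseteq> U"
  shows "\<exists>T. E \<subseteq> T \<and> T \<in> lmeasurable \<and> q * measure lebesgue T \<le> p * measure lebesgue U"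
proof -
  define \<mu> where "\<mu> = interval_measure F"
  have monoF: "\<And>x y. x \<le> y \<Longrightarrow> F x \<le> F y" using lipmonoD[OF F] by auto
  have \<mu>c: "emeasure \<mu> (cball a r) = ennreal (F (a + r) - F (a - r))" if "0 \<le> r" for a r
    unfolding \<mu>_def cball_eq_atLeastAtMost
    by (rule emeasure_interval_measure_Icc) (use that monoF lipmono_cont[OF F] in auto)
  have lamc: "emeasure lborel (cball a r) = ennreal (2 * r)" if "0 \<le> r" for a :: real and r
    unfolding cball_eq_atLeastAtMost using that by (simp add: emeasure_lborel_Icc)
  have sets\<mu>: "sets \<mu> = sets borel" by (simp add: \<mu>_def)
  define R where "R = (\<lambda>i::real\<times>real. (F (fst i + snd i) - F (fst i - snd i)) / (2 * snd i))"
  define K1 where "K1 = {i. 0 < snd i \<and> cball (fst i) (snd i) \<subseteq> U \<and> R i < p}"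
  have cov1: "\<exists>i. i \<in> K1 \<and> x \<in> cball (fst i) (snd i) \<and> snd i < d" if "x \<in> E" "0 < d" for x d
  proof -
    have "\<exists>\<^sub>F h in at 0. dq F x h < p" using E that by (auto simp: Ebad_def)
    from fine_cover[OF U(1) _ this that(2)] that U(3)
    show ?thesis by (auto simp: K1_def R_def)
  qed
  obtain C1 where C1: "countable C1" "C1 \<subseteq> K1"
     "pairwise (\<lambda>i j. disjnt (cball (fst i) (snd i)) (cball (fst j) (snd j))) C1"
     "negligible (E - (\<Union>i \<in> C1. cball (fst i) (snd i)))"
    using Vitali_covering_theorem_cballs[of K1 snd E fst] cov1 by (auto simp: K1_def)
  define V where "V = (\<Union>i \<in> C1. ball (fst i) (snd i))"
  have "open V" unfolding V_def by (auto intro: open_UN)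
  define K2 where "K2 = {i. 0 < snd i \<and> cball (fst i) (snd i) \<subseteq> V \<and> q < R i}"
  have cov2: "\<exists>i. i \<in> K2 \<and> x \<in> cball (fst i) (snd i) \<and> snd i < d" if "x \<in> E \<inter> V" "0 < d" for x d
  proof -
    have "\<exists>\<^sub>F h in at 0. q < dq F x h" using E that by (auto simp: Ebad_def)
    from fine_cover[OF \<open>open V\<close> _ this that(2)] that
    show ?thesis by (auto simp: K2_def R_def)
  qed
  obtain C2 where C2: "countable C2" "C2 \<subseteq> K2"
     "pairwise (\<lambda>i j. disjnt (cball (fst i) (snd i)) (cball (fst j) (snd j))) C2"
     "negligible (E \<inter> V - (\<Union>i \<in> C2. cball (fst i) (snd i)))"
    using Vitali_covering_theorem_cballs[of K2 snd "E \<inter> V" fst] cov2 by (auto simp: K2_def)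
  define W where "W = (\<Union>i \<in> C2. cball (fst i) (snd i))"
  define B1 where "B1 = (\<Union>i \<in> C1. cball (fst i) (snd i))"
  define N where "N = (E \<inter> V - W) \<union> (E - B1) \<union> (\<Union>i \<in> C1. cball (fst i) (snd i) - ball (fst i) (snd i))"
  have negN: "negligible N"
  proof -
    have "negligible (\<Union>i \<in> C1. cball (fst i) (snd i) - ball (fst i) (snd i))"
    proof (rule negligible_countable_Union)
      show "countable ((\<lambda>i. cball (fst i) (snd i) - ball (fst i) (snd i)) ` C1)" using C1(1) by auto
    next
      fix S assume "S \<in> (\<lambda>i. cball (fst i) (snd i) - ball (fst i) (snd i)) ` C1"
      then obtain i where "S = cball (fst i) (snd i) - ball (fst i) (snd i)" by auto
      then show "negligible S"
        using negligible_subset[OF negligible_finite cball_minus_ball_real] by blast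
    qed
    then show ?thesis using C1(4) C2(4) unfolding N_def W_def B1_def by auto
  qed
  have VB1: "V \<subseteq> B1" unfolding V_def B1_def by auto
  have B1U: "B1 \<subseteq> U" unfolding B1_def using C1(2) by (auto simp: K1_def)
  have WV: "W \<subseteq> V" unfolding W_def using C2(2) by (auto simp: K2_def)
  have ET: "E \<subseteq> W \<union> N" unfolding N_def V_def B1_def by blast
  have NU: "N \<subseteq> U" unfolding N_def using U(3) B1U unfolding B1_def by blast
  have Wb: "W \<in> sets borel" unfolding W_def
    by (rule sets.countable_UN'') (auto intro: C2(1) borel_closed)
  have B1b: "B1 \<in> sets borel" unfolding B1_def
    by (rule sets.countable_UN'') (auto intro: C1(1) borel_closed)
  have Ub: "U \<in> sets borel" using U(1) by auto
  have disj1: "disjoint_family_on (\<lambda>i. cball (fst i) (snd i)) C1"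
    using C1(3) by (auto simp: disjoint_family_on_def pairwise_def disjnt_def)
  have disj2: "disjoint_family_on (\<lambda>i. cball (fst i) (snd i)) C2"
    using C2(3) by (auto simp: disjoint_family_on_def pairwise_def disjnt_def)
  have pos1: "i \<in> C1 \<Longrightarrow> 0 < snd i" for i using C1(2) by (auto simp: K1_def)
  have pos2: "i \<in> C2 \<Longrightarrow> 0 < snd i" for i using C2(2) by (auto simp: K2_def)
  have lamW: "emeasure lborel W = (\<integral>\<^sup>+ i. ennreal (2 * snd i) \<partial>count_space C2)"
    unfolding W_def
    by (subst emeasure_UN_countable[OF _ C2(1) disj2]) (simp_all add: sets_lborel, rule nn_integral_cong, simp add: lamc pos2 less_imp_le)
  have lamB1: "emeasure lborel B1 = (\<integral>\<^sup>+ i. ennreal (2 * snd i) \<partial>count_space C1)"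
    unfolding B1_def
    by (subst emeasure_UN_countable[OF _ C1(1) disj1]) (simp_all add: sets_lborel, rule nn_integral_cong, simp add: lamc pos1 less_imp_le)
  have muW: "emeasure \<mu> W = (\<integral>\<^sup>+ i. ennreal (F (fst i + snd i) - F (fst i - snd i)) \<partial>count_space C2)"
    unfolding W_def
    by (subst emeasure_UN_countable[OF _ C2(1) disj2]) (simp_all add: sets\<mu>, rule nn_integral_cong, simp add: \<mu>c pos2 less_imp_le)
  have muB1: "emeasure \<mu> B1 = (\<integral>\<^sup>+ i. ennreal (F (fst i + snd i) - F (fst i - snd i)) \<partial>count_space C1)"
    unfolding B1_def
    by (subst emeasure_UN_countable[OF _ C1(1) disj1]) (simp_all add: sets\<mu>, rule nn_integral_cong, simp add: \<mu>c pos1 less_imp_le)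
  have "ennreal q * emeasure lborel W = (\<integral>\<^sup>+ i. ennreal q * ennreal (2 * snd i) \<partial>count_space C2)"
    unfolding lamW by (rule nn_integral_cmult[symmetric]) simp
  also have "\<dots> \<le> (\<integral>\<^sup>+ i. ennreal (F (fst i + snd i) - F (fst i - snd i)) \<partial>count_space C2)"
  proof (rule nn_integral_mono)
    fix i assume "i \<in> space (count_space C2)"
    then have "i \<in> K2" "i \<in> C2" using C2(2) by auto
    then have "q < R i" "0 < snd i" by (auto simp: K2_def)
    then have "q * (2 * snd i) \<le> F (fst i + snd i) - F (fst i - snd i)"
      by (simp add: R_def field_simps)
    then show "ennreal q * ennreal (2 * snd i) \<le> ennreal (F (fst i + snd i) - F (fst i - snd i))"
      using pq \<open>0 < snd i\<close> by (simp add: ennreal_mult[symmetric] ennreal_leI)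
  qed
  also have "\<dots> = emeasure \<mu> W" using muW by simp
  also have "\<dots> \<le> emeasure \<mu> B1"
    by (rule emeasure_mono) (use WV VB1 B1b in \<open>auto simp: sets\<mu>\<close>)
  also have "\<dots> \<le> (\<integral>\<^sup>+ i. ennreal p * ennreal (2 * snd i) \<partial>count_space C1)"
    unfolding muB1
  proof (rule nn_integral_mono)
    fix i assume "i \<in> space (count_space C1)"
    then have "i \<in> K1" "i \<in> C1" using C1(2) by auto
    then have "R i < p" "0 < snd i" by (auto simp: K1_def)
    then have "F (fst i + snd i) - F (fst i - snd i) \<le> p * (2 * snd i)"
      by (simp add: R_def field_simps)
    then show "ennreal (F (fst i + snd i) - F (fst i - snd i)) \<le> ennreal p * ennreal (2 * snd i)"
      using pq \<open>0 < snd i\<close> by (simp add: ennreal_mult[symmetric])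
  qed
  also have "\<dots> = ennreal p * emeasure lborel B1"
    unfolding lamB1 by (rule nn_integral_cmult) simp
  also have "\<dots> \<le> ennreal p * emeasure lborel U"
    by (intro mult_left_mono emeasure_mono) (use B1U Ub in auto)
  finally have ineq: "ennreal q * emeasure lborel W \<le> ennreal p * emeasure lborel U" .
  have Uf: "U \<in> fmeasurable lborel"
  proof -
    have "U \<in> lmeasurable" using U lmeasurable_open by auto
    then have "emeasure lebesgue U < \<infinity>" by (auto simp: fmeasurable_def)
    moreover have "emeasure lebesgue U = emeasure lborel U"
      using Ub by (simp add: emeasure_completion)
    ultimately show ?thesis using Ub by (auto simp: fmeasurable_def)
  qed
  have Wf: "W \<in> fmeasurable lborel"
    using Uf Wb WV VB1 B1U by (intro fmeasurableI2[OF Uf]) auto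
  have "q * measure lborel W \<le> p * measure lborel U"
    using ineq pq unfolding emeasure_eq_measure2[OF Uf] emeasure_eq_measure2[OF Wf]
    by (simp add: ennreal_mult[symmetric] ennreal_le_iff)
  moreover have "measure lebesgue W = measure lborel W" "measure lebesgue U = measure lborel U"
    using Wb Ub by (simp_all add: measure_completion)
  moreover have "W \<union> N \<in> lmeasurable"
  proof (rule bounded_set_imp_lmeasurable)
    show "bounded (W \<union> N)" using U(2) NU WV VB1 B1U bounded_subset by (metis le_sup_iff order_trans)
    have "W \<in> sets lebesgue" using Wb by (auto intro!: sets_completionI_sets simp: sets_lborel)
    then show "W \<union> N \<in> sets lebesgue" using negN negligible_imp_sets by auto
  qed
  moreover have "measure lebesgue (W \<union> N) = measure lebesgue W"
    using Wb negN by (intro measure_Un_null_set) (auto simp: negligible_iff_null_sets intro!: sets_completionI_sets)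
  ultimately show ?thesis using ET by (intro exI[of _ "W \<union> N"]) auto
qed


lemma Ebad_cball_negligible:
  assumes F: "lipmono F" and pq: "0 < p" "p < q"
  shows "negligible (Ebad F p q \<inter> cball 0 R)"
proof -
  define E where "E = Ebad F p q \<inter> cball 0 R"
  define M where "M = {measure lebesgue T | T. E \<subseteq> T \<and> T \<in> lmeasurable}"
  define m where "m = Inf M"
  have "measure lebesgue (cball (0::real) R) \<in> M" unfolding M_def E_def
    by (intro CollectI exI[of _ "cball (0::real) R"]) auto
  then have Mne: "M \<noteq> {}" by auto
  have bdd: "bdd_below M" unfolding M_def by (auto intro!: bdd_belowI[of _ 0])
  have m0: "0 \<le> m" unfolding m_def using Mne by (intro cInf_greatest) (auto simp: M_def)
  have key: "q * m \<le> p * (m + 2 * e)" if ep: "e > 0" for e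
  proof -
    have "m < m + e" using that by auto
    then obtain x where "x \<in> M" "x < m + e" using cInf_lessD[OF Mne] unfolding m_def by blast
    then obtain T where T: "E \<subseteq> T" "T \<in> lmeasurable" "measure lebesgue T < m + e"
      unfolding M_def by auto
    obtain U0 where U0: "open U0" "T \<subseteq> U0" "(U0 - T) \<in> lmeasurable" "emeasure lebesgue (U0 - T) < ennreal e"
    proof -
      have "T \<in> sets lebesgue" using T(2) by (simp add: fmeasurable_def)
      from sets_lebesgue_outer_open[OF this ep] show thesis using that by metis
    qed
    have "measure lebesgue (U0 - T) < e"
      using U0(4) that unfolding emeasure_eq_measure2[OF U0(3)] by (simp add: ennreal_less_iff)
    define U where "U = U0 \<inter> ball 0 (R + 1)"
    have U: "open U" "bounded U" "E \<subseteq> U"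
      using U0 T(1) by (auto simp: U_def E_def)
    have Ul: "U \<in> lmeasurable" using U lmeasurable_open by auto
    have "measure lebesgue U \<le> measure lebesgue (T \<union> (U0 - T))"
      by (rule measure_mono_fmeasurable) (use U0 T Ul fmeasurable.Un[OF T(2) U0(3)] in \<open>auto simp: U_def fmeasurable_def\<close>)
    also have "\<dots> \<le> measure lebesgue T + measure lebesgue (U0 - T)"
      by (rule measure_Un_le) (use U0 T in \<open>auto simp: fmeasurable_def\<close>)
    finally have mU: "measure lebesgue U < m + 2 * e"
      using T(3) \<open>measure lebesgue (U0 - T) < e\<close> by auto
    obtain T' where T': "E \<subseteq> T'" "T' \<in> lmeasurable" "q * measure lebesgue T' \<le> p * measure lebesgue U"
      using core[OF F pq _ U(1,2,3)] unfolding E_def by auto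
    have "m \<le> measure lebesgue T'" unfolding m_def using T' by (intro cInf_lower[OF _ bdd]) (auto simp: M_def)
    then have "q * m \<le> q * measure lebesgue T'" using pq by auto
    also have "\<dots> \<le> p * measure lebesgue U" by (rule T'(3))
    also have "\<dots> \<le> p * (m + 2 * e)" using mU pq by auto
    finally show ?thesis .
  qed
  have "m = 0"
  proof (rule ccontr)
    assume "m \<noteq> 0"
    with m0 have "m > 0" by auto
    define e where "e = (q - p) * m / (4 * p)"
    have "e > 0" using pq \<open>m > 0\<close> by (auto simp: e_def)
    have "p * (2 * e) = (q - p) * m / 2" using pq by (simp add: e_def field_simps)
    moreover have "p * (m + 2 * e) = p * m + p * (2 * e)" by (simp add: algebra_simps)
    ultimately have "q * m \<le> p * m + (q - p) * m / 2" using key[OF \<open>e > 0\<close>] by linarith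
    then show False using pq \<open>m > 0\<close> by (simp add: algebra_simps field_simps)
  qed
  show ?thesis
    unfolding negligible_outer E_def[symmetric]
  proof (intro allI impI)
    fix e :: real assume "e > 0"
    then obtain x where "x \<in> M" "x < e" using cInf_lessD[OF Mne, of e] \<open>m = 0\<close> unfolding m_def by auto
    then show "\<exists>T. E \<subseteq> T \<and> T \<in> lmeasurable \<and> measure lebesgue T < e" unfolding M_def by auto
  qed
qed

lemma Ebad_negligible:
  assumes F: "lipmono F" and pq: "0 < p" "p < q"
  shows "negligible (Ebad F p q)"
proof -
  have "Ebad F p q = \<Union> (range (\<lambda>n::nat. Ebad F p q \<inter> cball 0 (real n)))"
  proof (intro set_eqI iffI)
    fix x assume "x \<in> Ebad F p q"
    obtain n :: nat where "norm x \<le> real n" using real_arch_simple by blast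
    then show "x \<in> \<Union> (range (\<lambda>n::nat. Ebad F p q \<inter> cball 0 (real n)))"
      using \<open>x \<in> Ebad F p q\<close> by (auto simp: dist_norm)
  qed auto
  also have "negligible \<dots>"
    by (rule negligible_countable_Union) (auto intro: Ebad_cball_negligible[OF assms])
  finally show ?thesis .
qed

lemma nondiff_negligible:
  assumes F: "lipmono F"
  shows "negligible (nondiff F)"
  unfolding nondiff_eq[OF F]
  by (rule negligible_countable_Union)
     (auto intro: Ebad_negligible[OF F] countable_subset[OF _ countable_SIGMA[OF countable_rat countable_rat]])

lemma nondiff_null:
  assumes F: "lipmono F"
  shows "nondiff F \<in> null_sets lborel"
  using nondiff_negligible[OF F] nondiff_borel[OF F]
  by (simp add: negligible_iff_null_sets null_sets_completion_iff sets_lborel)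

lemma AE_diff:
  assumes F: "lipmono F"
  shows "AE t in lborel. F differentiable (at t)"
  using AE_not_in[OF nondiff_null[OF F]] by (simp add: nondiff_def)


definition dF :: "(real \<Rightarrow> real) \<Rightarrow> real \<Rightarrow> real" where
  "dF F t = (if F differentiable (at t) then deriv F t else 0)"

lemma dF_deriv:
  assumes "F differentiable (at t)"
  shows "(F has_real_derivative dF F t) (at t)"
  using assms by (simp add: dF_def DERIV_deriv_iff_real_differentiable)

lemma dF_bounds:
  assumes F: "lipmono F"
  shows "0 \<le> dF F t" "dF F t \<le> 1"
proof -
  have "0 \<le> dF F t \<and> dF F t \<le> 1"
  proof (cases "F differentiable (at t)")
    case True
    have lim: "((\<lambda>h. dq F t h) \<longlongrightarrow> dF F t) (at 0)"
      using dF_deriv[OF True] unfolding DERIV_def dq_def .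
    have "0 \<le> dF F t"
      by (rule tendsto_lowerbound[OF lim]) (auto intro: always_eventually dq_bounds[OF F])
    moreover have "dF F t \<le> 1"
      by (rule tendsto_upperbound[OF lim]) (auto intro: always_eventually dq_bounds[OF F])
    ultimately show ?thesis by auto
  qed (simp add: dF_def)
  then show "0 \<le> dF F t" "dF F t \<le> 1" by auto
qed

lemma inv_Suc_at0: "filterlim (\<lambda>n. inverse (real (Suc n))) (at 0) sequentially"
  unfolding filterlim_at using LIMSEQ_inverse_real_of_nat by auto

lemma dF_lim:
  assumes "F differentiable (at t)"
  shows "(\<lambda>n. dq F t (inverse (real (Suc n)))) \<longlonglongrightarrow> dF F t"
proof -
  have lim: "((\<lambda>h. dq F t h) \<longlongrightarrow> dF F t) (at 0)"
    using dF_deriv[OF assms] unfolding DERIV_def dq_def .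
  show ?thesis by (rule filterlim_compose[OF lim inv_Suc_at0])
qed

lemma dF_eq_lim:
  assumes F: "lipmono F"
  shows "dF F = (\<lambda>t. if t \<in> nondiff F then 0 else lim (\<lambda>n. dq F t (inverse (real (Suc n)))))"
proof
  fix t show "dF F t = (if t \<in> nondiff F then 0 else lim (\<lambda>n. dq F t (inverse (real (Suc n)))))"
  proof (cases "t \<in> nondiff F")
    case True then show ?thesis by (simp add: nondiff_def dF_def)
  next
    case False
    then have "F differentiable (at t)" by (simp add: nondiff_def)
    from limI[OF dF_lim[OF this]] False show ?thesis by simp
  qed
qed

lemma dF_borel:
  assumes F: "lipmono F"
  shows "dF F \<in> borel_measurable borel"
proof -
  have "(\<lambda>t. lim (\<lambda>n. dq F t (inverse (real (Suc n))))) \<in> borel_measurable borel"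
    by (rule borel_measurable_lim_metric) (rule borel_measurable_continuous_onI[OF dq_cont_t[OF F]])
  then show ?thesis
    unfolding dF_eq_lim[OF F]
    by (intro measurable_If_set) (auto simp: nondiff_borel[OF F])
qed

lemma dF_borel_lborel:
  assumes F: "lipmono F"
  shows "dF F \<in> borel_measurable lborel"
  using dF_borel[OF F] by (simp add: measurable_lborel2)

lemma ftc:
  assumes F: "lipmono F" and ab: "a \<le> b"
  shows "(LBINT t:{a..b}. dF F t) = F b - F a"
proof -
  obtain \<Phi> where \<Phi>: "\<And>x. (\<Phi> has_vector_derivative F x) (at x)"
    using einterval_antiderivative[of "-\<infinity>" "\<infinity>" F] lipmono_isCont[OF F] by auto
  have \<Phi>': "(\<Phi> has_real_derivative F x) (at x)" for x
    using \<Phi>[of x] by (simp add: has_real_derivative_iff_has_vector_derivative)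
  define h where "h n = inverse (real (Suc n))" for n
  define s where "s n t = indicator {a..b} t *\<^sub>R dq F t (h n)" for n t
  have int_s: "integral\<^sup>L lborel (s n) = (\<Phi> (b + h n) - \<Phi> b) / h n - (\<Phi> (a + h n) - \<Phi> a) / h n" for n
  proof -
    define G where "G t = (\<Phi> (t + h n) - \<Phi> t) / h n" for t
    have "(G has_real_derivative dq F t (h n)) (at t)" for t
    proof -
      have "((\<lambda>t. \<Phi> (t + h n)) has_real_derivative F (t + h n) * 1) (at t)"
        by (rule DERIV_chain2[OF \<Phi>']) (auto intro!: derivative_eq_intros)
      moreover have "h n \<noteq> 0" by (simp add: h_def)
      ultimately show ?thesis unfolding G_def dq_def
        by (auto intro!: derivative_eq_intros \<Phi>')
    qed
    then have "(LBINT x. indicat_real {a..b} x *\<^sub>R dq F x (h n)) = G b - G a"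
      by (intro integral_FTC_atLeastAtMost[OF ab])
         (auto simp: has_real_derivative_iff_has_vector_derivative[symmetric]
               intro: has_field_derivative_at_within continuous_on_subset[OF dq_cont_t[OF F]])
    moreover have "s n = (\<lambda>t. indicat_real {a..b} t * dq F t (h n))" by (rule ext) (simp add: s_def)
    ultimately show ?thesis by (simp add: G_def)
  qed
  have limb: "(\<lambda>n. (\<Phi> (x + h n) - \<Phi> x) / h n) \<longlonglongrightarrow> F x" for x
  proof -
    have "((\<lambda>k. (\<Phi> (x + k) - \<Phi> x) / k) \<longlongrightarrow> F x) (at 0)"
      using \<Phi>'[of x] unfolding DERIV_def .
    from filterlim_compose[OF this inv_Suc_at0] show ?thesis by (simp add: h_def)
  qed
  have lim1: "(\<lambda>n. integral\<^sup>L lborel (s n)) \<longlonglongrightarrow> F b - F a"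
    unfolding int_s by (intro tendsto_diff limb)
  have lim2: "(\<lambda>n. integral\<^sup>L lborel (s n)) \<longlonglongrightarrow> integral\<^sup>L lborel (\<lambda>t. indicator {a..b} t *\<^sub>R dF F t)"
  proof (rule integral_dominated_convergence[where w="indicator {a..b}"])
    show "(\<lambda>t. indicator {a..b} t *\<^sub>R dF F t) \<in> borel_measurable lborel"
      using dF_borel_lborel[OF F] by measurable
    show "s n \<in> borel_measurable lborel" for n
      unfolding s_def using borel_measurable_continuous_onI[OF dq_cont_t[OF F]]
      by (simp add: measurable_lborel2)
    show "integrable lborel (indicator {a..b} :: real \<Rightarrow> real)"
      by (rule integrable_real_indicator) (use ab in \<open>auto simp: emeasure_lborel_Icc\<close>)
    show "AE x in lborel. (\<lambda>n. s n x) \<longlonglongrightarrow> indicator {a..b} x *\<^sub>R dF F x"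
      using AE_diff[OF F]
    proof (rule eventually_mono)
      fix x assume "F differentiable (at x)"
      then show "(\<lambda>n. s n x) \<longlonglongrightarrow> indicator {a..b} x *\<^sub>R dF F x"
        unfolding s_def h_def by (intro tendsto_scaleR tendsto_const dF_lim)
    qed
    show "AE x in lborel. norm (s n x) \<le> indicator {a..b} x" for n
      using dq_bounds[OF F] by (auto simp: s_def indicator_def)
  qed
  have "integral\<^sup>L lborel (\<lambda>t. indicator {a..b} t *\<^sub>R dF F t) = F b - F a"
    using LIMSEQ_unique[OF lim2 lim1] .
  then show ?thesis by (simp add: set_lebesgue_integral_def)
qed


lemma integral_finite_exc:
  fixes f g :: "real \<Rightarrow> real"
  assumes N: "finite N" and eq: "\<And>t. t \<notin> N \<Longrightarrow> f t = g t"
  shows "integral\<^sup>L lborel f = integral\<^sup>L lborel g"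
proof -
  define h where "h t = f t - g t" for t
  have h_eq: "h = (\<lambda>t. \<Sum>x\<in>N. if t = x then h x else 0)"
  proof
    fix t show "h t = (\<Sum>x\<in>N. if t = x then h x else 0)"
      using eq[of t] N by (auto simp: sum.delta' h_def)
  qed
  have "(\<lambda>t. \<Sum>x\<in>N. indicator {x} t * h x) \<in> borel_measurable lborel"
    by (intro borel_measurable_sum borel_measurable_times borel_measurable_indicator borel_measurable_const) auto
  moreover have "(\<lambda>t. \<Sum>x\<in>N. indicator {x} t * h x) = h"
  proof
    fix t show "(\<Sum>x\<in>N. indicator {x} t * h x) = h t"
    proof -
      have "(\<Sum>x\<in>N. indicator {x} t * h x) = (\<Sum>x\<in>N. if x = t then h x else 0)"
        by (rule sum.cong) (auto simp: indicator_def)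
      also have "\<dots> = (if t \<in> N then h t else 0)" using N by (simp add: sum.delta)
      also have "\<dots> = h t" using eq[of t] by (auto simp: h_def)
      finally show ?thesis .
    qed
  qed
  ultimately have hm: "h \<in> borel_measurable lborel" by simp
  have hAE: "AE t in lborel. h t = 0"
    using AE_not_in[OF finite_imp_null_set_lborel[OF N]] by (rule eventually_mono) (use eq in \<open>auto simp: h_def\<close>)
  have hint: "integrable lborel h"
    using integrable_cong_AE[OF hm _ hAE] by simp
  have h0: "integral\<^sup>L lborel h = 0"
    using integral_cong_AE[OF hm _ hAE] by simp
  have fgh: "f = (\<lambda>t. g t + h t)" by (auto simp: h_def)
  show ?thesis
  proof (cases "integrable lborel g")
    case True
    then show ?thesis unfolding fgh using hint h0 by simp
  next
    case False
    have "\<not> integrable lborel f"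
    proof
      assume "integrable lborel f"
      then have "integrable lborel (\<lambda>t. f t - h t)" using hint by auto
      then show False using False by (simp add: h_def)
    qed
    then show ?thesis using False by (simp add: not_integrable_integral_eq)
  qed
qed

lemma integrable_bounded01:
  fixes f :: "real \<Rightarrow> real"
  assumes "f \<in> borel_measurable lborel" "\<And>t. \<bar>f t\<bar> \<le> B"
  shows "integrable lborel (\<lambda>t. indicator {a..b} t * f t)"
proof (rule Bochner_Integration.integrable_bound)
  show "integrable lborel (\<lambda>t. B * indicator {a..b} t :: real)"
    by (intro integrable_mult_right integrable_real_indicator) (auto simp: emeasure_lborel_Icc_eq)
  show "(\<lambda>t. indicator {a..b} t * f t) \<in> borel_measurable lborel" using assms(1) by measurable
  show "AE x in lborel. norm (indicator {a..b} x * f x) \<le> norm (B * indicator {a..b} x :: real)"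
  proof (rule always_eventually, rule allI)
    fix x
    have "\<bar>f x\<bar> \<le> B" by (rule assms(2))
    then have "0 \<le> B" by linarith
    with \<open>\<bar>f x\<bar> \<le> B\<close> show "norm (indicator {a..b} x * f x) \<le> norm (B * indicator {a..b} x :: real)"
      by (cases "x \<in> {a..b}") simp_all
  qed
qed

lemma dF_local:
  assumes "open S" "t \<in> S" "\<And>z. z \<in> S \<Longrightarrow> f z = g z"
  shows "dF f t = dF g t"
proof -
  have *: "(f has_real_derivative D) (at t) \<longleftrightarrow> (g has_real_derivative D) (at t)" for D
    using has_field_derivative_transform_within_open[OF _ assms(1,2), of f D g]
          has_field_derivative_transform_within_open[OF _ assms(1,2), of g D f] assms(3) by auto
  show ?thesis
  proof (cases "f differentiable (at t)")
    case True
    then obtain D where D: "(f has_real_derivative D) (at t)" using real_differentiable_def by blast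
    then have "(g has_real_derivative D) (at t)" using * by auto
    then show ?thesis using D by (auto simp: dF_def DERIV_imp_deriv real_differentiable_def)
  next
    case False
    then have "\<not> g differentiable (at t)" using * by (auto simp: real_differentiable_def)
    then show ?thesis using False by (simp add: dF_def)
  qed
qed

lemma dF_deriv_eq: "(f has_real_derivative D) (at t) \<Longrightarrow> dF f t = D"
  by (auto simp: dF_def DERIV_imp_deriv real_differentiable_def)

lemma partial2_dF: "partial2 C u t = dF (C u) t"
  by (simp add: partial2_def dF_def)

definition clampF :: "(real \<Rightarrow> real \<Rightarrow> real) \<Rightarrow> real \<Rightarrow> real \<Rightarrow> real" where
  "clampF C u t = C u (max 0 (min 1 t))"

definition gC :: "(real \<Rightarrow> real \<Rightarrow> real) \<Rightarrow> real \<Rightarrow> real \<Rightarrow> real" where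
  "gC C u = dF (clampF C u)"

lemma copula_bound:
  assumes "copula C"
  shows "\<And>u. u \<in> {0..1} \<Longrightarrow> C u 0 = 0" "\<And>u. u \<in> {0..1} \<Longrightarrow> C 0 u = 0"
        "\<And>u. u \<in> {0..1} \<Longrightarrow> C u 1 = u" "\<And>u. u \<in> {0..1} \<Longrightarrow> C 1 u = u"
  using assms by (auto simp: copula_def)

lemma copula_2inc:
  assumes "copula C" "0 \<le> u1" "u1 \<le> u2" "u2 \<le> 1" "0 \<le> v1" "v1 \<le> v2" "v2 \<le> 1"
  shows "C u2 v2 - C u2 v1 - C u1 v2 + C u1 v1 \<ge> 0"
  using assms unfolding copula_def by blast

lemma clamp_props:
  fixes x y :: real
  assumes "x \<le> y"
  shows "max 0 (min 1 x) \<le> max 0 (min 1 y)" "max 0 (min 1 y) - max 0 (min 1 x) \<le> y - x"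
    "0 \<le> max 0 (min 1 x)" "max 0 (min 1 x) \<le> (1::real)"
  using assms by auto

lemma clampF_lipmono:
  assumes C: "copula C" and u: "u \<in> {0..1}"
  shows "lipmono (clampF C u)"
  unfolding lipmono_def
proof (intro allI impI conjI)
  fix x y :: real assume "x \<le> y"
  define a where "a = max 0 (min 1 x)"
  define b where "b = max 0 (min 1 y)"
  have ab: "0 \<le> a" "a \<le> b" "b \<le> 1" "b - a \<le> y - x"
    unfolding a_def b_def using \<open>x \<le> y\<close> by (auto simp: max_def min_def)
  have cx: "clampF C u x = C u a" and cy: "clampF C u y = C u b"
    unfolding clampF_def a_def b_def by (rule refl)+
  have u01: "0 \<le> u" "u \<le> 1" using u by auto
  have i1: "C u b - C u a - C 0 b + C 0 a \<ge> 0"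
    by (rule copula_2inc[OF C]) (use u01 ab in linarith)+
  have "C 0 b = 0" "C 0 a = 0" using copula_bound(2)[OF C] ab by simp_all
  with i1 show "clampF C u x \<le> clampF C u y" unfolding cx cy by linarith
  have i2: "C 1 b - C 1 a - C u b + C u a \<ge> 0"
    by (rule copula_2inc[OF C]) (use u01 ab in linarith)+
  have "C 1 b = b" "C 1 a = a" using copula_bound(4)[OF C] ab by simp_all
  with i2 ab show "clampF C u y - clampF C u x \<le> y - x" unfolding cx cy by linarith
qed

lemma clampF_eq: "t \<in> {0..1} \<Longrightarrow> clampF C u t = C u t"
  by (simp add: clampF_def)

lemma partial2_gC:
  assumes "t \<in> {0<..<1}"
  shows "partial2 C u t = gC C u t"
  unfolding partial2_dF gC_def
  by (rule dF_local[of "{0<..<1}"]) (use assms in \<open>auto simp: clampF_def\<close>)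

lemma gC_bounds:
  assumes C: "copula C" and u: "u \<in> {0..1}"
  shows "0 \<le> gC C u t" "gC C u t \<le> 1"
  using dF_bounds[OF clampF_lipmono[OF C u]] by (auto simp: gC_def)

lemma gC_borel:
  assumes C: "copula C" and u: "u \<in> {0..1}"
  shows "gC C u \<in> borel_measurable lborel"
  using dF_borel_lborel[OF clampF_lipmono[OF C u]] by (simp add: gC_def)

lemma gC_ftc:
  assumes C: "copula C" and u: "u \<in> {0..1}" and v: "v \<in> {0..1}"
  shows "integral\<^sup>L lborel (\<lambda>t. indicator {0..v} t * gC C u t) = C u v"
proof -
  have v0: "0 \<le> v" using v by simp
  have "(LBINT t:{0..v}. dF (clampF C u) t) = clampF C u v - clampF C u 0"
    by (rule ftc[OF clampF_lipmono[OF C u] v0])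
  also have "clampF C u v = C u v" using v by (simp add: clampF_def)
  also have "clampF C u 0 = 0" using copula_bound(1)[OF C u] by (simp add: clampF_def)
  finally show ?thesis by (simp add: set_lebesgue_integral_def gC_def)
qed

lemma gC_AE_mono:
  assumes C: "copula C" and u: "0 \<le> u1" "u1 \<le> u2" "u2 \<le> 1"
  shows "AE t in lborel. gC C u1 t \<le> gC C u2 t"
proof -
  have L1: "lipmono (clampF C u1)" and L2: "lipmono (clampF C u2)"
    using clampF_lipmono[OF C] u by auto
  define H where "H t = clampF C u2 t - clampF C u1 t" for t
  have Hmono: "H x \<le> H y" if "x \<le> y" for x y
  proof -
    define a where "a = max 0 (min 1 x)"
    define b where "b = max 0 (min 1 y)"
    have ab: "0 \<le> a" "a \<le> b" "b \<le> 1"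
        unfolding a_def b_def using \<open>x \<le> y\<close> by (auto simp: max_def min_def)
    have "C u2 b - C u2 a - C u1 b + C u1 a \<ge> 0"
      by (rule copula_2inc[OF C]) (use u ab in linarith)+
    moreover have "H x = C u2 a - C u1 a" "H y = C u2 b - C u1 b"
      unfolding H_def clampF_def a_def b_def by (rule refl)+
    ultimately show ?thesis by linarith
  qed
  show ?thesis
    using AE_diff[OF L1] AE_diff[OF L2]
  proof eventually_elim
    case (elim t)
    have D: "(H has_real_derivative gC C u2 t - gC C u1 t) (at t)"
      unfolding H_def gC_def by (intro DERIV_diff dF_deriv elim)
    have "0 \<le> gC C u2 t - gC C u1 t"
    proof (rule tendsto_lowerbound)
      show "((\<lambda>h. (H (t + h) - H t) / h) \<longlongrightarrow> gC C u2 t - gC C u1 t) (at 0)"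
        using D unfolding DERIV_def .
      show "\<forall>\<^sub>F h in at 0. 0 \<le> (H (t + h) - H t) / h"
      proof (rule always_eventually, rule allI)
        fix h :: real
        show "0 \<le> (H (t + h) - H t) / h"
          using Hmono[of t "t + h"] Hmono[of "t + h" t]
        proof (cases "h \<ge> 0")
          case True
          then have "H t \<le> H (t + h)" by (intro Hmono) simp
          with True show ?thesis by (intro divide_nonneg_nonneg) simp_all
        next
          case False
          then have "H (t + h) \<le> H t" by (intro Hmono) simp
          with False show ?thesis by (intro divide_nonpos_neg) simp_all
        qed
      qed
    qed simp
    then show ?case by simp
  qed
qed

lemma gC_zero:
  assumes C: "copula C"
  shows "gC C 0 t = 0"
proof -
  have "clampF C 0 = (\<lambda>_. 0)" using copula_bound(2)[OF C] by (auto simp: clampF_def)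
  then show ?thesis unfolding gC_def by (simp add: dF_deriv_eq[OF DERIV_const])
qed

lemma gC_one:
  assumes C: "copula C" and t: "t \<in> {0<..<1}"
  shows "gC C 1 t = 1"
proof -
  have "gC C 1 t = dF (\<lambda>x. x) t"
    unfolding gC_def by (rule dF_local[of "{0<..<1}"]) (use t copula_bound(4)[OF C] in \<open>auto simp: clampF_def\<close>)
  also have "\<dots> = 1" by (rule dF_deriv_eq) (rule DERIV_ident)
  finally show ?thesis .
qed

lemma partial2_MC:
  assumes "t \<noteq> v"
  shows "partial2 MC v t = (if t < v then 1 else 0)"
proof (cases "t < v")
  case True
  have "dF (MC v) t = dF (\<lambda>x. x) t"
    by (rule dF_local[of "{..<v}"]) (use True in \<open>auto simp: MC_def\<close>)
  also have "\<dots> = 1" by (rule dF_deriv_eq) (rule DERIV_ident)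
  finally show ?thesis using True by (simp add: partial2_dF)
next
  case False
  with assms have "v < t" by auto
  have "dF (MC v) t = dF (\<lambda>x. v) t"
    by (rule dF_local[of "{v<..}"]) (use \<open>v < t\<close> in \<open>auto simp: MC_def\<close>)
  also have "\<dots> = 0" by (rule dF_deriv_eq) (rule DERIV_const)
  finally show ?thesis using False by (simp add: partial2_dF)
qed

lemma partial2_PiC: "partial2 PiC v t = v"
proof -
  have "(PiC v has_real_derivative v) (at t)"
    unfolding PiC_def[abs_def] by (auto intro!: derivative_eq_intros)
  then show ?thesis by (simp add: partial2_dF dF_deriv_eq)
qed


lemma upper_prod_eq:
  assumes C: "copula C" and u: "u \<in> {0..1}" and N: "finite N"
    and k: "\<And>t. t \<in> {0<..<1} \<Longrightarrow> t \<notin> N \<Longrightarrow> partial2 E v t = k t"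
  shows "upper_prod C E u v = integral\<^sup>L lborel (\<lambda>t. indicator {0..1} t * min (gC C u t) (k t))"
  unfolding upper_prod_def set_lebesgue_integral_def
proof (rule integral_finite_exc[of "N \<union> {0,1}"])
  show "finite (N \<union> {0,1})" using N by simp
  fix t :: real assume t: "t \<notin> N \<union> {0,1}"
  show "indicator {0..1} t *\<^sub>R min (partial2 C u t) (partial2 E v t) =
        indicator {0..1} t * min (gC C u t) (k t)"
  proof (cases "t \<in> {0..1}")
    case True
    then have "t \<in> {0<..<1}" using t by auto
    then show ?thesis using partial2_gC[of t C u] k[of t] t by simp
  qed simp
qed

lemma part_i:
  assumes C: "copula C" and u: "u \<in> {0..1}" and v: "v \<in> {0..1}"
  shows "upper_prod C MC u v = C u v"
proof -
  have "upper_prod C MC u v = integral\<^sup>L lborel (\<lambda>t. indicator {0..1} t * min (gC C u t) (if t < v then 1 else 0))"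
    by (rule upper_prod_eq[OF C u, of "{v}"]) (auto simp: partial2_MC)
  also have "\<dots> = integral\<^sup>L lborel (\<lambda>t. indicator {0..v} t * gC C u t)"
  proof (rule integral_finite_exc[of "{v}"])
    fix t assume "t \<notin> {v}"
    then have "t \<noteq> v" by simp
    show "indicator {0..1} t * min (gC C u t) (if t < v then 1 else 0) = indicator {0..v} t * gC C u t"
      using gC_bounds[OF C u, of t] v \<open>t \<noteq> v\<close> by (auto simp: indicator_def)
  qed simp
  also have "\<dots> = C u v" by (rule gC_ftc[OF C u v])
  finally show ?thesis .
qed

lemma gC_total:
  assumes C: "copula C" and u: "u \<in> {0..1}"
  shows "integral\<^sup>L lborel (\<lambda>t. indicator {0..1} t * gC C u t) = u"
  using gC_ftc[OF C u, of 1] copula_bound(3)[OF C u] by simp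

lemma part_ii_fwd:
  assumes C: "copula C" and D: "copula D"
    and H: "\<forall>u\<in>{0..1}. \<forall>v\<in>{0..1}. upper_prod C D u v = MC u v"
    and u: "u \<in> {0..1}" and v: "v \<in> {0..1}"
  shows "C u v = D u v"
proof -
  let ?g = "gC C u" and ?k = "gC D u"
  have gm: "?g \<in> borel_measurable lborel" "?k \<in> borel_measurable lborel"
    using gC_borel[OF C u] gC_borel[OF D u] by auto
  have gb: "0 \<le> ?g t" "?g t \<le> 1" "0 \<le> ?k t" "?k t \<le> 1" for t
    using gC_bounds[OF C u] gC_bounds[OF D u] by auto
  have "upper_prod C D u u = integral\<^sup>L lborel (\<lambda>t. indicator {0..1} t * min (?g t) (?k t))"
    by (rule upper_prod_eq[OF C u, of "{}"]) (auto simp: partial2_gC)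
  moreover have "upper_prod C D u u = u" using H u by (auto simp: MC_def)
  ultimately have Imin: "integral\<^sup>L lborel (\<lambda>t. indicator {0..1} t * min (?g t) (?k t)) = u" by simp
  have Ig: "integral\<^sup>L lborel (\<lambda>t. indicator {0..1} t * ?g t) = u" by (rule gC_total[OF C u])
  have Ik: "integral\<^sup>L lborel (\<lambda>t. indicator {0..1} t * ?k t) = u" by (rule gC_total[OF D u])
  have intmin: "integrable lborel (\<lambda>t. indicator {0..1} t * min (?g t) (?k t))"
  proof (rule integrable_bounded01[where B=1])
    show "(\<lambda>t. min (?g t) (?k t)) \<in> borel_measurable lborel" using gm by measurable
    fix t show "\<bar>min (?g t) (?k t)\<bar> \<le> 1" using gb[of t] by (simp add: min_def)
  qed
  have intg: "integrable lborel (\<lambda>t. indicator {0..1} t * ?g t)"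
    by (rule integrable_bounded01[where B=1]) (use gm gb in \<open>auto\<close>)
  have intk: "integrable lborel (\<lambda>t. indicator {0..1} t * ?k t)"
    by (rule integrable_bounded01[where B=1]) (use gm gb in \<open>auto\<close>)
  have AE1: "AE t in lborel. indicator {0..1} t * ?g t - indicator {0..1} t * min (?g t) (?k t) = 0"
  proof (subst integral_nonneg_eq_0_iff_AE[symmetric])
    show "integrable lborel (\<lambda>t. indicator {0..1} t * ?g t - indicator {0..1} t * min (?g t) (?k t))"
      using intg intmin by auto
    show "AE t in lborel. 0 \<le> indicator {0..1} t * ?g t - indicator {0..1} t * min (?g t) (?k t)"
      by (auto simp: indicator_def)
    show "integral\<^sup>L lborel (\<lambda>t. indicator {0..1} t * ?g t - indicator {0..1} t * min (?g t) (?k t)) = 0"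
      using Ig Imin intg intmin by simp
  qed
  have AE2: "AE t in lborel. indicator {0..1} t * ?k t - indicator {0..1} t * min (?g t) (?k t) = 0"
  proof (subst integral_nonneg_eq_0_iff_AE[symmetric])
    show "integrable lborel (\<lambda>t. indicator {0..1} t * ?k t - indicator {0..1} t * min (?g t) (?k t))"
      using intk intmin by auto
    show "AE t in lborel. 0 \<le> indicator {0..1} t * ?k t - indicator {0..1} t * min (?g t) (?k t)"
      by (auto simp: indicator_def)
    show "integral\<^sup>L lborel (\<lambda>t. indicator {0..1} t * ?k t - indicator {0..1} t * min (?g t) (?k t)) = 0"
      using Ik Imin intk intmin by simp
  qed
  have AE3: "AE t in lborel. indicator {0..v} t * ?g t = indicator {0..v} t * ?k t"
    using AE1 AE2
  proof eventually_elim
    case (elim t)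
    show ?case
    proof (cases "t \<in> {0..v}")
      case True
      then have "t \<in> {0..1}" using v by auto
      then show ?thesis using elim True by (auto simp: indicator_def min_def split: if_splits)
    qed simp
  qed
  have "C u v = integral\<^sup>L lborel (\<lambda>t. indicator {0..v} t * ?g t)" using gC_ftc[OF C u v] by simp
  also have "\<dots> = integral\<^sup>L lborel (\<lambda>t. indicator {0..v} t * ?k t)"
    by (rule integral_cong_AE) (use gm AE3 in auto)
  also have "\<dots> = D u v" using gC_ftc[OF D u v] by simp
  finally show ?thesis .
qed

lemma part_ii_bwd:
  assumes C: "copula C" and D: "copula D"
    and H: "\<forall>u\<in>{0..1}. \<forall>v\<in>{0..1}. C u v = D u v"
    and u: "u \<in> {0..1}" and v: "v \<in> {0..1}"
  shows "upper_prod C D u v = MC u v"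
proof -
  have cl: "clampF D v = clampF C v"
  proof
    fix t
    have "max 0 (min 1 t) \<in> {0..(1::real)}" by auto
    then show "clampF D v t = clampF C v t" using H v by (simp add: clampF_def)
  qed
  have "upper_prod C D u v = integral\<^sup>L lborel (\<lambda>t. indicator {0..1} t * min (gC C u t) (gC C v t))"
    by (rule upper_prod_eq[OF C u, of "{}"]) (auto simp: partial2_gC gC_def cl)
  also have "\<dots> = integral\<^sup>L lborel (\<lambda>t. indicator {0..1} t * gC C (min u v) t)"
  proof (rule integral_cong_AE)
    show "(\<lambda>t. indicator {0..1} t * min (gC C u t) (gC C v t)) \<in> borel_measurable lborel"
      using gC_borel[OF C u] gC_borel[OF C v] by measurable
    have "min u v \<in> {0..1}" using u v by auto
    then show "(\<lambda>t. indicator {0..1} t * gC C (min u v) t) \<in> borel_measurable lborel"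
      using gC_borel[OF C] by measurable
    show "AE t in lborel. indicator {0..1} t * min (gC C u t) (gC C v t) = indicator {0..1} t * gC C (min u v) t"
    proof (cases "u \<le> v")
      case True
      show ?thesis using gC_AE_mono[OF C, of u v] True u v
        by (auto elim!: eventually_mono simp: min_def)
    next
      case False
      show ?thesis using gC_AE_mono[OF C, of v u] False u v
        by (auto elim!: eventually_mono simp: min_def)
    qed
  qed
  also have "\<dots> = min u v" using gC_total[OF C, of "min u v"] u v by auto
  finally show ?thesis by (simp add: MC_def)
qed


definition PhiC :: "(real \<Rightarrow> real \<Rightarrow> real) \<Rightarrow> real \<Rightarrow> real \<Rightarrow> real" where
  "PhiC C u v = integral\<^sup>L lborel (\<lambda>t. indicator {0..1} t * min (gC C u t) v)"

lemma upper_PiC: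
  assumes C: "copula C" and u: "u \<in> {0..1}"
  shows "upper_prod C PiC u v = PhiC C u v"
  unfolding PhiC_def by (rule upper_prod_eq[OF C u, of "{}"]) (auto simp: partial2_PiC)

lemma PhiC_int:
  assumes C: "copula C" and u: "u \<in> {0..1}"
  shows "integrable lborel (\<lambda>t. indicator {0..1} t * min (gC C u t) v)"
proof (rule integrable_bounded01[where B="1 + \<bar>v\<bar>"])
  show "(\<lambda>t. min (gC C u t) v) \<in> borel_measurable lborel" using gC_borel[OF C u] by measurable
  fix t show "\<bar>min (gC C u t) v\<bar> \<le> 1 + \<bar>v\<bar>" using gC_bounds[OF C u, of t] by (simp add: min_def)
qed

lemma const_int01: "integral\<^sup>L lborel (\<lambda>t::real. indicator {0..1} t * (c::real)) = c"
proof -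
  have "integral\<^sup>L lborel (\<lambda>t::real. indicator {0..1} t * c) = integral\<^sup>L lborel (\<lambda>t::real. c * indicator {0..1} t)"
    by (simp add: mult.commute)
  also have "\<dots> = c * integral\<^sup>L lborel (indicator {0..1} :: real \<Rightarrow> real)"
    by (rule integral_mult_right_zero)
  also have "integral\<^sup>L lborel (indicator {0..1} :: real \<Rightarrow> real) = 1"
    by (simp add: measure_lborel_Icc)
  finally show ?thesis by simp
qed

lemma min_ineq:
  fixes a1 a2 v1 v2 :: real
  assumes "a1 \<le> a2" "v1 \<le> v2"
  shows "0 \<le> min a2 v2 - min a2 v1 - min a1 v2 + min a1 v1"
  using assms by (auto simp: min_def)

lemma min_concave:
  fixes g x y a b :: real
  assumes "0 \<le> a" "0 \<le> b" "a + b = 1"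
  shows "a * min g x + b * min g y \<le> min g (a * x + b * y)"
proof -
  have "a * min g x + b * min g y \<le> a * g + b * g"
    using assms by (intro add_mono mult_left_mono) auto
  moreover have "a * min g x + b * min g y \<le> a * x + b * y"
    using assms by (intro add_mono mult_left_mono) auto
  moreover have "a * g + b * g = g" using assms by (simp add: algebra_simps flip: distrib_right)
  ultimately show ?thesis by simp
qed

lemma part_iii:
  assumes C: "copula C"
  shows "SI_copula (upper_prod C PiC)"
proof -
  let ?E = "upper_prod C PiC"
  have E: "u \<in> {0..1} \<Longrightarrow> ?E u v = PhiC C u v" for u v using upper_PiC[OF C] by blast
  have cop: "copula ?E"
    unfolding copula_def
  proof (intro conjI ballI allI impI)
    fix u :: real assume u: "u \<in> {0..1}"
    show "?E u 0 = 0"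
    proof -
      have "(\<lambda>t. indicator {0..1} t * min (gC C u t) 0) = (\<lambda>t. 0::real)"
      proof
        fix t show "indicator {0..1} t * min (gC C u t) 0 = 0"
          using gC_bounds(1)[OF C u, of t] by (simp add: min_absorb2)
      qed
      then have "PhiC C u 0 = integral\<^sup>L lborel (\<lambda>t. 0)" by (simp add: PhiC_def)
      then show ?thesis using E[OF u] by simp
    qed
    show "?E 0 u = 0"
    proof -
      have "(\<lambda>t. indicator {0..1} t * min (gC C 0 t) u) = (\<lambda>t. 0::real)"
        using gC_zero[OF C] u by (intro ext) (simp add: min_def)
      then have "PhiC C 0 u = integral\<^sup>L lborel (\<lambda>t. 0)" by (simp add: PhiC_def)
      then show ?thesis using E[of 0 u] by simp
    qed
    show "?E u 1 = u"
    proof -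
      have "(\<lambda>t. indicator {0..1} t * min (gC C u t) 1) = (\<lambda>t. indicator {0..1} t * gC C u t)"
        using gC_bounds[OF C u] by (intro ext) (simp add: min_def)
      then have "PhiC C u 1 = integral\<^sup>L lborel (\<lambda>t. indicator {0..1} t * gC C u t)" by (simp add: PhiC_def)
      then show ?thesis using E[OF u] gC_total[OF C u] by simp
    qed
    show "?E 1 u = u"
    proof -
      have "PhiC C 1 u = integral\<^sup>L lborel (\<lambda>t::real. indicator {0..1} t * u)"
        unfolding PhiC_def
      proof (rule integral_finite_exc[of "{0,1}"])
        fix t :: real assume "t \<notin> {0,1}"
        then show "indicator {0..1} t * min (gC C 1 t) u = indicator {0..1} t * u"
          using gC_one[OF C, of t] u by (cases "t \<in> {0..1}") (auto simp: min_def)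
      qed simp
      then show ?thesis using E[of 1 u] const_int01 by simp
    qed
  next
    fix u1 u2 v1 v2 :: real
    assume a: "0 \<le> u1" "u1 \<le> u2" "u2 \<le> 1" "0 \<le> v1" "v1 \<le> v2" "v2 \<le> 1"
    have u1: "u1 \<in> {0..1}" and u2: "u2 \<in> {0..1}" using a by auto
    let ?f = "\<lambda>u v t. indicator {0..1} t * min (gC C u t) v"
    have "?E u2 v2 - ?E u2 v1 - ?E u1 v2 + ?E u1 v1 =
          integral\<^sup>L lborel (\<lambda>t. ?f u2 v2 t - ?f u2 v1 t - ?f u1 v2 t + ?f u1 v1 t)"
      using E[OF u1] E[OF u2] PhiC_int[OF C u1] PhiC_int[OF C u2]
      by (simp add: PhiC_def)
    also have "\<dots> \<ge> 0"
    proof (rule integral_nonneg_AE)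
      show "AE t in lborel. 0 \<le> ?f u2 v2 t - ?f u2 v1 t - ?f u1 v2 t + ?f u1 v1 t"
        using gC_AE_mono[OF C a(1,2,3)]
      proof eventually_elim
        case (elim t)
        have "0 \<le> min (gC C u2 t) v2 - min (gC C u2 t) v1 - min (gC C u1 t) v2 + min (gC C u1 t) v1"
          by (rule min_ineq[OF elim a(5)])
        then show ?case by (cases "t \<in> {0..1}") (simp_all add: algebra_simps)
      qed
    qed
    finally show "?E u2 v2 - ?E u2 v1 - ?E u1 v2 + ?E u1 v1 \<ge> 0" .
  qed
  have conc: "concave_on {0..1} (\<lambda>t. ?E v t)" if v: "v \<in> {0..1}" for v
    unfolding concave_on_def convex_on_def
  proof (intro conjI ballI allI impI)
    show "convex {0..1::real}" by (rule convex_real_interval)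
    fix x y a b :: real
    assume x: "x \<in> {0..1}" and y: "y \<in> {0..1}" and ab: "0 \<le> a" "0 \<le> b" "a + b = 1"
    have "a * PhiC C v x + b * PhiC C v y =
          integral\<^sup>L lborel (\<lambda>t. indicator {0..1} t * (a * min (gC C v t) x + b * min (gC C v t) y))"
      using PhiC_int[OF C v, of x] PhiC_int[OF C v, of y]
      by (simp add: PhiC_def algebra_simps)
    also have "\<dots> \<le> PhiC C v (a * x + b * y)"
      unfolding PhiC_def
    proof (rule integral_mono)
      show "integrable lborel (\<lambda>t. indicator {0..1} t * (a * min (gC C v t) x + b * min (gC C v t) y))"
        using PhiC_int[OF C v, of x] PhiC_int[OF C v, of y] by (simp add: algebra_simps)
      show "integrable lborel (\<lambda>t. indicator {0..1} t * min (gC C v t) (a * x + b * y))"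
        by (rule PhiC_int[OF C v])
      fix t
      show "indicator {0..1} t * (a * min (gC C v t) x + b * min (gC C v t) y)
            \<le> indicator {0..1} t * min (gC C v t) (a * x + b * y)"
        using min_concave[OF ab, of "gC C v t" x y] by (cases "t \<in> {0..1}") simp_all
    qed
    finally have "a * PhiC C v x + b * PhiC C v y \<le> PhiC C v (a * x + b * y)" .
    then show "- ?E v (a *\<^sub>R x + b *\<^sub>R y) \<le> a * - ?E v x + b * - ?E v y"
      using E[OF v] by simp
  qed
  show ?thesis unfolding SI_copula_def using cop conc by blast
qed

theorem mainTheorem1:
  assumes "copula C" and "copula D"
  shows "(\<forall>u\<in>{0..1}. \<forall>v\<in>{0..1}. upper_prod C MC u v = C u v)
     \<and> ((\<forall>u\<in>{0..1}. \<forall>v\<in>{0..1}. upper_prod C D u v = MC u v)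
          \<longleftrightarrow> (\<forall>u\<in>{0..1}. \<forall>v\<in>{0..1}. C u v = D u v))
     \<and> SI_copula (upper_prod C PiC)"
proof -
  have i: "\<forall>u\<in>{0..1}. \<forall>v\<in>{0..1}. upper_prod C MC u v = C u v"
    using part_i[OF assms(1)] by blast
  have ii: "(\<forall>u\<in>{0..1}. \<forall>v\<in>{0..1}. upper_prod C D u v = MC u v)
          \<longleftrightarrow> (\<forall>u\<in>{0..1}. \<forall>v\<in>{0..1}. C u v = D u v)"
  proof
    assume H: "\<forall>u\<in>{0..1}. \<forall>v\<in>{0..1}. upper_prod C D u v = MC u v"
    show "\<forall>u\<in>{0..1}. \<forall>v\<in>{0..1}. C u v = D u v"
      using part_ii_fwd[OF assms H] by blast
  next
    assume H: "\<forall>u\<in>{0..1}. \<forall>v\<in>{0..1}. C u v = D u v"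
    show "\<forall>u\<in>{0..1}. \<forall>v\<in>{0..1}. upper_prod C D u v = MC u v"
      using part_ii_bwd[OF assms H] by blast
  qed
  have iii: "SI_copula (upper_prod C PiC)" by (rule part_iii[OF assms(1)])
  show ?thesis using i ii iii by blast
qed

end
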